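(* Fix an integer $M\ge 1$, $\lambda>0$, $\epsilon>0$, $L_{\max}>0$, a decoding error probability $\delta\in(0,0.5)$ and a channel gain $|h_{ab}|^2>0$. Let $X$ be a random variable that is the sum of $M$ independent exponential random variables each with mean $1/\lambda$ (i.e. $X$ has density $\frac{\lambda^M x^{M-1}e^{-\lambda x}}{(M-1)!}$, $x\ge 0$), and for $P_a>0$ define $$g(P_a)=\mathbb{E}\left[\ln(XP_a+1)-\frac{XP_a}{XP_a+1}\right].$$ For $L_M>0$ and $P_a>0$ let $$R(L_M,P_a)=\log_2\left(1+P_a|h_{ab}|^2\right)-\sqrt{\frac{1}{L_M}\left(1-\frac{1}{(1+P_a|h_{ab}|^2)^2}\right)}\,\frac{Q^{-1}(\delta)}{\ln 2}.$$ Consider the problem of maximizing $L_M\,R(L_M,P_a)(1-\delta)$ over $L_M$ and $P_a$ subject to $L_M\, g(P_a)\le 2\epsilon^2$ and $L_M\le L_{\max}$. Then, for a given $P_a$, the optimal number of channel uses is $$L_M^*=\min\left(L_{\max},\frac{2\epsilon^2}{g(P_a)}\right),$$ and the optimal transmit power $P_a$ is a solution of the one-dimensional problem of maximizing $L_M^*\,R(L_M^*,P_a)(1-\delta)$ over $P_a>0$.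
   Context: $Q^{-1}$ denotes the inverse of the Gaussian Q-function $Q(x)=\frac{1}{\sqrt{2\pi}}\int_x^\infty e^{-t^2/2}dt$. The quantity $L_M\left(\ln(XP_a+1)-\frac{XP_a}{XP_a+1}\right)$ is the Kullback–Leibler divergence between the distributions of $L_M$ i.i.d. observations $\mathcal{CN}(\mathbf{0},\mathbf{I}_M)$ and $\mathcal{CN}(\mathbf{0},P_a\mathbf{h}\mathbf{h}^H+\mathbf{I}_M)$ with $\|\mathbf{h}\|^2=X$, so the constraint $L_M g(P_a)\le 2\epsilon^2$ is the expected-KL covertness constraint; $L_M$ is treated as a continuous variable.
   Formalization: The optimality of $L_M^*$ for a given $P_a$ holds only for those $P_a>0$ with $R(L_M^*,P_a)\ge 0$, while the claim that the optimal $P_a$ solves the one-dimensional problem carries no such condition. Apart from conventions, each condition added here is assumed in the paper as well or is needed for the statement above to hold. *)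

theory Defs
  imports "HOL-Probability.Probability"
begin

definition Qfun :: "real \<Rightarrow> real" where
  "Qfun x = (LINT t:{x..}|lborel. exp (- (t^2) / 2) / sqrt (2 * pi))"

definition Qinv :: "real \<Rightarrow> real" where
  "Qinv d = (THE y. Qfun y = d)"

definition gfun :: "nat \<Rightarrow> real \<Rightarrow> real \<Rightarrow> real" where
  "gfun M lam P = (\<integral>x. erlang_density (M - 1) lam x *
        (ln (x * P + 1) - (x * P) / (x * P + 1)) \<partial>lborel)"

text \<open>R(L_M, P_a); h stands for |h_ab|^2.\<close>
definition Rate :: "real \<Rightarrow> real \<Rightarrow> real \<Rightarrow> real \<Rightarrow> real" where
  "Rate delta h L P = log 2 (1 + P * h)
     - sqrt ((1 / L) * (1 - 1 / (1 + P * h)^2)) * Qinv delta / ln 2"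

definition objective :: "real \<Rightarrow> real \<Rightarrow> real \<Rightarrow> real \<Rightarrow> real" where
  "objective delta h L P = L * Rate delta h L P * (1 - delta)"

definition feasible :: "nat \<Rightarrow> real \<Rightarrow> real \<Rightarrow> real \<Rightarrow> real \<Rightarrow> real \<Rightarrow> bool" where
  "feasible M lam eps Lmax L P \<longleftrightarrow>
     0 < L \<and> 0 < P \<and> L * gfun M lam P \<le> 2 * eps^2 \<and> L \<le> Lmax"

definition Lopt :: "nat \<Rightarrow> real \<Rightarrow> real \<Rightarrow> real \<Rightarrow> real \<Rightarrow> real" where
  "Lopt M lam eps Lmax P = min Lmax (2 * eps^2 / gfun M lam P)"

end

theory Submission
  imports Defs
begin

lemma gfun_pos:
  assumes lam: "lam > 0" and P: "P > 0"
  shows "gfun M lam P > 0"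
proof -
  define k where "k = M - 1"
  define f where "f x = erlang_density k lam x * (ln (x * P + 1) - (x * P) / (x * P + 1))" for x
  have fm[measurable]: "f \<in> borel_measurable lborel" unfolding f_def by measurable
  have nn: "0 \<le> f x" for x
  proof (cases "x < 0")
    case True then show ?thesis by (simp add: f_def erlang_density_def)
  next
    case False
    then have "0 \<le> x * P" using P by simp
    then have "ln (x * P + 1) - (x * P) / (x * P + 1) \<ge> 0"
      by (smt (verit, del_insts) ln_add1_ge)
    then show ?thesis unfolding f_def using lam by simp
  qed
  have pos: "0 < f x" if "x > 0" for x
  proof -
    have "0 < x * P" using P that by simp
    then have "ln (x * P + 1) - (x * P) / (x * P + 1) > 0"
      by (metis Groups.add_ac(2) diff_gt_0_iff_gt ln_add1_gt)
    moreover have "erlang_density k lam x > 0" using that lam by (simp add: erlang_density_def)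
    ultimately show ?thesis unfolding f_def by simp
  qed
  have im: "integrable lborel (\<lambda>x. erlang_density k lam x * x ^ 1)"
  proof (rule integrableI_nonneg)
    show "AE x in lborel. 0 \<le> erlang_density k lam x * x ^ 1"
      using lam by (intro AE_I2) (simp add: erlang_density_def)
    show "(\<integral>\<^sup>+ x. ennreal (erlang_density k lam x * x ^ 1) \<partial>lborel) < \<infinity>"
      using nn_integral_erlang_ith_moment[OF lam, of k 1] by simp
  qed simp
  have ib: "integrable lborel (\<lambda>x. P * (erlang_density k lam x * x ^ 1))"
    using im by simp
  have int: "integrable lborel f"
  proof (rule Bochner_Integration.integrable_bound[OF ib fm])
    show "AE x in lborel. norm (f x) \<le> norm (P * (erlang_density k lam x * x ^ 1))"
    proof (rule AE_I2)
      fix x :: real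
      show "norm (f x) \<le> norm (P * (erlang_density k lam x * x ^ 1))"
      proof (cases "x < 0")
        case True then show ?thesis by (simp add: f_def erlang_density_def)
      next
        case False
        then have y: "0 \<le> x * P" using P by simp
        have "ln (x * P + 1) - (x * P) / (x * P + 1) \<le> x * P"
          using y by (smt (verit, ccfv_SIG) divide_nonneg_nonneg ln_le_minus_one)
        then have "f x \<le> erlang_density k lam x * (x * P)"
          unfolding f_def using lam by (intro mult_left_mono) auto
        then show ?thesis using nn[of x] False P lam by (simp add: algebra_simps)
      qed
    qed
  qed
  have ge: "integral\<^sup>L lborel f \<ge> 0" using nn by simp
  have ne: "integral\<^sup>L lborel f \<noteq> 0"
  proof
    assume "integral\<^sup>L lborel f = 0"
    then have "AE x in lborel. f x = 0"
      using integral_nonneg_eq_0_iff_AE[OF int] nn by simp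
    then obtain N where N2: "{x \<in> space lborel. \<not> f x = 0} \<subseteq> N" and N0: "emeasure lborel N = 0"
      and N1: "N \<in> sets lborel"
      by (rule AE_E)
    have "{0<..(1::real)} \<subseteq> N"
    proof
      fix x :: real assume "x \<in> {0<..1}"
      then have "f x \<noteq> 0" using pos[of x] by simp
      then show "x \<in> N" using N2 by auto
    qed
    then have "emeasure lborel {0<..(1::real)} \<le> emeasure lborel N"
      using N1 by (intro emeasure_mono) auto
    then show False using N0 by simp
  qed
  show ?thesis using ge ne unfolding gfun_def f_def k_def by linarith
qed

lemma obj_form:
  assumes "L > 0"
  shows "objective delta h L P = (1 - delta) * (log 2 (1 + P * h) * (sqrt L)^2
           - (sqrt (1 - 1 / (1 + P * h)^2) * Qinv delta / ln 2) * sqrt L)"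
proof -
  have "L * (sqrt ((1 / L) * (1 - 1 / (1 + P * h)^2)) * Qinv delta / ln 2)
        = (sqrt (1 - 1 / (1 + P * h)^2) * Qinv delta / ln 2) * (L * sqrt (1 / L))"
  proof -
    have "sqrt ((1 / L) * (1 - 1 / (1 + P * h)^2)) = sqrt (1 / L) * sqrt (1 - 1 / (1 + P * h)^2)"
      by (rule real_sqrt_mult)
    then show ?thesis by (simp only:) (simp add: algebra_simps)
  qed
  also have "L * sqrt (1 / L) = sqrt L"
  proof -
    have sp: "sqrt L > 0" using assms by simp
    have ss: "sqrt L * sqrt L = L" using assms by simp
    have "sqrt (1 / L) = 1 / sqrt L" by (simp add: real_sqrt_divide)
    then have "L * sqrt (1 / L) = (sqrt L * sqrt L) / sqrt L" using ss by simp
    also have "\<dots> = sqrt L" by (rule nonzero_mult_div_cancel_right) (use sp in simp)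
    finally show ?thesis .
  qed
  finally have e: "L * (sqrt ((1 / L) * (1 - 1 / (1 + P * h)^2)) * Qinv delta / ln 2)
        = (sqrt (1 - 1 / (1 + P * h)^2) * Qinv delta / ln 2) * sqrt L" .
  have sq: "(sqrt L)^2 = L" using assms by simp
  have "objective delta h L P = (L * log 2 (1 + P * h)
       - L * (sqrt ((1 / L) * (1 - 1 / (1 + P * h)^2)) * Qinv delta / ln 2)) * (1 - delta)"
    unfolding objective_def Rate_def by (simp only: right_diff_distrib)
  also have "\<dots> = (L * log 2 (1 + P * h)
       - (sqrt (1 - 1 / (1 + P * h)^2) * Qinv delta / ln 2) * sqrt L) * (1 - delta)"
    by (simp only: e)
  finally show ?thesis
    by (simp only: sq mult.commute)
qed

lemma quad1:
  fixes a c s t :: real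
  assumes "0 \<le> s" "s \<le> t" "a \<ge> 0" "a * t - c \<ge> 0"
  shows "a * s^2 - c * s \<le> a * t^2 - c * t"
proof -
  have "a * t^2 - c * t - (a * s^2 - c * s) = (t - s) * (a * (t + s) - c)"
    by (simp add: power2_eq_square algebra_simps)
  moreover
  have as: "a * s \<ge> 0" using assms by simp
  have "a * (t + s) = a * t + a * s" by (rule distrib_left)
  then have X: "a * (t + s) - c \<ge> 0" using assms as by linarith
  have "(t - s) * (a * (t + s) - c) \<ge> 0" using X assms by simp
  ultimately show ?thesis by linarith
qed

lemma quad2:
  fixes a c s t :: real
  assumes "0 < s" "s \<le> t" "a \<ge> 0" "a * s^2 - c * s > a * t^2 - c * t"
  shows "a * (s/2)^2 - c * (s/2) > a * s^2 - c * s"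
proof -
  have "a * t^2 - c * t - (a * s^2 - c * s) = (t - s) * (a * (t + s) - c)"
    by (simp add: power2_eq_square algebra_simps)
  then have neg: "(t - s) * (a * (t + s) - c) < 0" using assms by simp
  then have "a * (t + s) - c < 0" using assms mult_nonneg_nonneg[of "t - s" "a * (t + s) - c"]
    by linarith
  moreover have "a * (3/2 * s) \<le> a * (t + s)" using assms by (intro mult_left_mono) auto
  ultimately have "a * (3/2 * s) - c < 0" by simp
  moreover have "a * s^2 - c * s - (a * (s/2)^2 - c * (s/2)) = (s / 2) * (a * (3/2 * s) - c)"
    by (simp add: power2_eq_square algebra_simps)
  moreover have "(s / 2) * (a * (3/2 * s) - c) < 0"
    using calculation(1) assms by (intro mult_pos_neg) auto
  ultimately show ?thesis by linarith
qed

theorem proposition1: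
  fixes M :: nat and lam eps Lmax delta h :: real
  assumes "M \<ge> 1" and "lam > 0" and "eps > 0" and "Lmax > 0"
    and "0 < delta" and "delta < 1/2" and "h > 0"
  shows "(\<forall>P>0. 0 \<le> Rate delta h (Lopt M lam eps Lmax P) P \<longrightarrow>
            feasible M lam eps Lmax (Lopt M lam eps Lmax P) P \<and>
            (\<forall>L. feasible M lam eps Lmax L P \<longrightarrow>
                 objective delta h L P \<le> objective delta h (Lopt M lam eps Lmax P) P))
       \<and> (\<forall>L0 P0. feasible M lam eps Lmax L0 P0 \<and>
            (\<forall>L P. feasible M lam eps Lmax L P \<longrightarrow>
                 objective delta h L P \<le> objective delta h L0 P0) \<longrightarrow>
            objective delta h L0 P0 = objective delta h (Lopt M lam eps Lmax P0) P0 \<and>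
            (\<forall>P>0. objective delta h (Lopt M lam eps Lmax P) P
                   \<le> objective delta h (Lopt M lam eps Lmax P0) P0))"
proof -
  define Ls where "Ls P = Lopt M lam eps Lmax P" for P
  define A where "A P = log 2 (1 + P * h)" for P
  define C where "C P = sqrt (1 - 1 / (1 + P * h)^2) * Qinv delta / ln 2" for P
  define F where "F P s = A P * s^2 - C P * s" for P s
  have d: "1 - delta > 0" using assms by simp
  have objF: "objective delta h L P = (1 - delta) * F P (sqrt L)" if "L > 0" for L P
    using obj_form[OF that] unfolding F_def A_def C_def by simp
  have Apos: "A P \<ge> 0" if "P > 0" for P
  proof -
    have "1 \<le> 1 + P * h" using that assms by simp
    then show ?thesis unfolding A_def by simp
  qed
  have gpos: "gfun M lam P > 0" if "P > 0" for P using gfun_pos[OF assms(2) that] .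
  have Lspos: "Ls P > 0" if "P > 0" for P
    using gpos[OF that] assms unfolding Ls_def Lopt_def by simp
  have Lsfeas: "feasible M lam eps Lmax (Ls P) P" if "P > 0" for P
  proof -
    have g: "gfun M lam P > 0" using gpos[OF that] .
    have "Ls P * gfun M lam P \<le> (2 * eps^2 / gfun M lam P) * gfun M lam P"
      unfolding Ls_def Lopt_def using g by (intro mult_right_mono) auto
    also have "\<dots> = 2 * eps^2" using g by simp
    finally show ?thesis unfolding feasible_def using Lspos[OF that] that
      by (simp add: Ls_def Lopt_def)
  qed
  have feasle: "L \<le> Ls P" if "feasible M lam eps Lmax L P" for L P
  proof -
    have P: "P > 0" and L: "L > 0" and c: "L * gfun M lam P \<le> 2 * eps^2" and m: "L \<le> Lmax"
      using that unfolding feasible_def by auto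
    have "L \<le> 2 * eps^2 / gfun M lam P" using c gpos[OF P] by (simp add: pos_le_divide_eq)
    then show ?thesis using m unfolding Ls_def Lopt_def by simp
  qed
  have part1: "objective delta h L P \<le> objective delta h (Ls P) P"
    if P: "P > 0" and R: "0 \<le> Rate delta h (Ls P) P" and L: "feasible M lam eps Lmax L P" for L P
  proof -
    have Lp: "L > 0" using L unfolding feasible_def by simp
    have t: "sqrt (Ls P) > 0" using Lspos[OF P] by simp
    have "Rate delta h (Ls P) P * sqrt (Ls P) = A P * sqrt (Ls P) - C P"
    proof -
      have "sqrt ((1 / Ls P) * (1 - 1 / (1 + P * h)^2)) = sqrt (1 - 1 / (1 + P * h)^2) / sqrt (Ls P)"
        by (simp add: real_sqrt_mult real_sqrt_divide)
      then show ?thesis unfolding Rate_def A_def C_def using t by (simp add: field_simps)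
    qed
    then have "A P * sqrt (Ls P) - C P \<ge> 0" using R t by (metis mult_nonneg_nonneg less_imp_le)
    then have "F P (sqrt L) \<le> F P (sqrt (Ls P))"
      unfolding F_def using feasle[OF L] Apos[OF P] Lp by (intro quad1) auto
    then show ?thesis using objF[OF Lp] objF[OF Lspos[OF P]] d by simp
  qed
  have part2: "objective delta h L0 P0 = objective delta h (Ls P0) P0 \<and>
            (\<forall>P>0. objective delta h (Ls P) P \<le> objective delta h (Ls P0) P0)"
    if F0: "feasible M lam eps Lmax L0 P0" and opt: "\<forall>L P. feasible M lam eps Lmax L P \<longrightarrow>
                 objective delta h L P \<le> objective delta h L0 P0" for L0 P0
  proof -
    have P0: "P0 > 0" and L0: "L0 > 0" using F0 unfolding feasible_def by auto
    have le1: "objective delta h (Ls P0) P0 \<le> objective delta h L0 P0"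
      using opt Lsfeas[OF P0] by blast
    have le2: "objective delta h L0 P0 \<le> objective delta h (Ls P0) P0"
    proof (rule ccontr)
      assume "\<not> ?thesis"
      then have "F P0 (sqrt L0) > F P0 (sqrt (Ls P0))"
        using objF[OF L0] objF[OF Lspos[OF P0]] d by (simp add: mult_less_cancel_left_pos)
      moreover have sp: "0 < sqrt L0" using L0 by simp
      moreover have sle: "sqrt L0 \<le> sqrt (Ls P0)" using feasle[OF F0] by simp
      ultimately have gt: "F P0 (sqrt L0 / 2) > F P0 (sqrt L0)"
        unfolding F_def using quad2[OF sp sle Apos[OF P0], of "C P0"] by blast
      have F4: "feasible M lam eps Lmax (L0 / 4) P0"
      proof -
        have "L0 / 4 * gfun M lam P0 \<le> L0 * gfun M lam P0" using gpos[OF P0] L0 by simp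
        moreover have "L0 * gfun M lam P0 \<le> 2 * eps^2" "L0 \<le> Lmax" using F0 unfolding feasible_def by auto
        ultimately show ?thesis using L0 P0 unfolding feasible_def by linarith
      qed
      have sq: "sqrt (L0 / 4) = sqrt L0 / 2" by (simp add: real_sqrt_divide)
      have o4: "objective delta h (L0 / 4) P0 = (1 - delta) * F P0 (sqrt L0 / 2)"
        using objF[of "L0/4" P0] L0 unfolding sq by simp
      have "objective delta h (L0 / 4) P0 > objective delta h L0 P0"
        unfolding o4 objF[OF L0] using gt d by simp
      then show False using opt F4 by (meson not_le)
    qed
    have "objective delta h (Ls P) P \<le> objective delta h (Ls P0) P0" if "P > 0" for P
      using opt Lsfeas[OF that] le2 by (meson order_trans)
    then show ?thesis using le1 le2 by auto
  qed
  show ?thesis using part1 part2 Lsfeas unfolding Ls_def by blast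
qed

end
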